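(* Let $0<\lambda<1/e$ and $E(z)=\lambda e^z$. For every $r>0$, $\lim_{x\to\infty}L^r(x)/x=0$. Moreover, for all $s>r\ge 0$... more precisely for all real $s>r>0$ and every $\gamma>0$, $\lim_{x\to\infty}\bigl(L^s(x)\bigr)^\gamma/L^r(x)=0$.
   Context: For $0<\lambda<1/e$, $E(z)=\lambda e^z$ has real fixed points $\alpha<1<\beta$ with $E'(\beta)=\beta$. $S$ is the entire solution of Schröder's equation $S(\beta z)=E(S(z))$ with $S(0)=\beta$, $S'(0)=1$; it is real and strictly increasing on $\mathbb R$ and maps $\mathbb R$ bijectively onto $(\alpha,\infty)$. For $r\in\mathbb R$ the fractional iterate $E^r:[\alpha,\infty)\to[\alpha,\infty)$ is $E^r(\alpha)=\alpha$, $E^r(x)=S(\beta^rS^{-1}(x))$ for $x>\alpha$; $L^r=E^{-r}$, so $L(x)=\log x-\log\lambda$. *)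

theory Defs
  imports "HOL-Analysis.Analysis"
begin

definition fixA :: "real \<Rightarrow> real" where
  "fixA lam = (THE a. a < 1 \<and> lam * exp a = a)"

definition fixB :: "real \<Rightarrow> real" where
  "fixB lam = (THE b. 1 < b \<and> lam * exp b = b)"

definition schroeder :: "real \<Rightarrow> complex \<Rightarrow> complex" where
  "schroeder lam = (THE S. S holomorphic_on UNIV
      \<and> (\<forall>z. S (complex_of_real (fixB lam) * z) = complex_of_real lam * exp (S z))
      \<and> S 0 = complex_of_real (fixB lam) \<and> deriv S 0 = 1)"

text \<open>Its restriction to the real line (real-valued there).\<close>

definition schroederR :: "real \<Rightarrow> real \<Rightarrow> real" where
  "schroederR lam x = Re (schroeder lam (complex_of_real x))"

text \<open>Inverse of the real Schroeder function on (alpha, infinity).\<close>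

definition schroederR_inv :: "real \<Rightarrow> real \<Rightarrow> real" where
  "schroederR_inv lam y = (THE x. schroederR lam x = y)"

definition iterE :: "real \<Rightarrow> real \<Rightarrow> real \<Rightarrow> real" where
  "iterE lam r x = (if x = fixA lam then fixA lam
      else schroederR lam (fixB lam powr r * schroederR_inv lam x))"

text \<open>Fractional iterate L^r = E^(-r) of the logarithm L(x) = ln x - ln lam.\<close>

definition iterL :: "real \<Rightarrow> real \<Rightarrow> real \<Rightarrow> real" where
  "iterL lam r x = iterE lam (- r) x"

end

theory Submission
  imports Defs "HOL-Complex_Analysis.Complex_Analysis"
begin


locale koen =
  fixes b :: real
  assumes b1: "1 < b"
begin

definition ell :: "complex \<Rightarrow> complex" where "ell u = ln (1 + u / of_real b)"
definition rho :: real where "rho = 2 / (b + 1)"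
definition ee :: "complex \<Rightarrow> complex" where "ee t = of_real b * (exp t - 1)"
definition rr :: real where "rr = (rho - 1/b) * b^2 / 2"
definition qq :: real where "qq = b * rho^2"

lemma bpos: "0 < b" using b1 by simp

lemma rho_pos: "0 < rho" and rho_lt1: "rho < 1" and rho_gt: "1/b < rho"
  using b1 by (auto simp: rho_def field_simps)

lemma rr_pos: "0 < rr" using rho_gt b1 by (simp add: rr_def)
lemma rr_le: "rr \<le> b/2"
proof -
  have "rho * b \<le> 2" using b1 by (simp add: rho_def field_simps)
  then have "(rho - 1/b) * b \<le> 1" using b1 by (simp add: algebra_simps)
  then have "(rho - 1/b) * b * b \<le> b" using b1 by (simp add: mult_right_le_one_le)
  then show ?thesis unfolding rr_def using b1 by (simp add: power2_eq_square algebra_simps)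
qed
lemma rr_rho: "1/b + 2*rr/b^2 = rho"
  using b1 by (simp add: rr_def)

lemma qq_pos: "0 < qq" and qq_lt1: "qq < 1"
proof -
  show "0 < qq" using rho_pos bpos by (simp add: qq_def)
  have "(b-1)*(b-1) > 0" using b1 by simp
  then have "(b+1)^2 > 4*b" by (simp add: power2_eq_square algebra_simps)
  note this
  then show "qq < 1" using b1 by (simp add: qq_def rho_def field_simps power2_eq_square)
qed

lemma ell_0 [simp]: "ell 0 = 0" by (simp add: ell_def)

lemma ell_approx:
  assumes "norm u \<le> b/2"
  shows "norm (ell u - u / of_real b) \<le> 2 * norm u ^ 2 / b ^ 2"
proof -
  define z where "z = u / of_real b"
  have nz: "norm z = norm u / b" using bpos by (simp add: z_def norm_divide)
  have z2: "norm z \<le> 1/2" using assms bpos by (simp add: nz field_simps)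
  then have "norm (ln (1 + z) - z) \<le> norm z ^ 2 / (1 - norm z)"
    by (intro Ln_approx_linear) simp
  also have "\<dots> \<le> norm z ^ 2 / (1/2)"
    using z2 by (intro divide_left_mono) auto
  also have "\<dots> = 2 * norm u ^ 2 / b ^ 2" by (simp add: nz power_divide)
  finally show ?thesis by (simp add: ell_def z_def)
qed

lemma ell_contr:
  assumes "norm u \<le> rr"
  shows "norm (ell u) \<le> rho * norm u"
proof -
  have nb: "norm u \<le> b/2" using assms rr_le by simp
  have "norm (ell u) \<le> norm (u / of_real b) + norm (ell u - u / of_real b)"
    by (metis add.commute diff_add_cancel norm_triangle_ineq)
  also have "\<dots> \<le> norm u / b + 2 * norm u ^ 2 / b ^ 2"
    using ell_approx[OF nb] bpos by (simp add: norm_divide)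
  also have "\<dots> \<le> norm u / b + 2 * (rr * norm u) / b ^ 2"
    using assms by (intro add_left_mono divide_right_mono) (auto simp: power2_eq_square intro: mult_right_mono)
  also have "\<dots> = norm u * (1/b + 2*rr/b^2)" by (simp add: field_simps)
  also have "\<dots> = rho * norm u" by (simp add: rr_rho)
  finally show ?thesis .
qed

lemma ell_holo: "ell holomorphic_on ball 0 b"
proof -
  have "(\<lambda>u. Ln (1 + u / of_real b)) holomorphic_on ball 0 b"
  proof (rule holomorphic_on_Ln')
    fix u :: complex assume "u \<in> ball 0 b"
    then have "norm u < b" by simp
    then have "\<bar>Re u\<bar> < b" using abs_Re_le_cmod le_less_trans by blast
    then have "Re (1 + u / of_real b) > 0" using bpos by (simp add: field_simps)
    then show "1 + u / of_real b \<notin> \<real>\<^sub>\<le>\<^sub>0" by (auto simp: complex_nonpos_Reals_iff)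
  qed (use bpos in \<open>auto intro!: holomorphic_intros\<close>)
  then show ?thesis by (simp add: ell_def [abs_def])
qed

lemma ell_iter_bound:
  assumes "norm u \<le> rr"
  shows "norm ((ell ^^ n) u) \<le> rho ^ n * norm u"
proof (induction n)
  case 0 then show ?case by simp
next
  case (Suc n)
  have "rho ^ n * norm u \<le> norm u" using rho_pos rho_lt1
    by (simp add: mult_left_le_one_le power_le_one)
  then have "norm ((ell ^^ n) u) \<le> rr" using Suc assms by linarith
  then have "norm ((ell ^^ Suc n) u) \<le> rho * norm ((ell ^^ n) u)" by (simp add: ell_contr)
  also have "\<dots> \<le> rho * (rho ^ n * norm u)" using Suc rho_pos by (simp add: mult_left_mono)
  finally show ?case by simp
qed

lemma ell_iter_in: "norm u \<le> rr \<Longrightarrow> norm ((ell ^^ n) u) \<le> norm u"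
  using ell_iter_bound[of u n] rho_pos rho_lt1
  by (smt (verit, best) mult_left_le_one_le norm_ge_zero power_le_one zero_le_power)

lemma ell_iter_cball: "u \<in> cball 0 rr \<Longrightarrow> (ell ^^ n) u \<in> cball 0 rr"
  using ell_iter_in[of u n] by simp

lemma ell_iter_holo: "(ell ^^ n) holomorphic_on cball 0 rr"
proof (induction n)
  case 0 then show ?case by (simp add: holomorphic_on_ident id_def)
next
  case (Suc n)
  have sub: "cball 0 rr \<subseteq> ball 0 b" using rr_le bpos rr_pos by auto
  have "(ell \<circ> (ell ^^ n)) holomorphic_on cball 0 rr"
    by (rule holomorphic_on_compose_gen[OF Suc holomorphic_on_subset[OF ell_holo sub]])
       (use ell_iter_cball in blast)
  then show ?case by (simp add: o_def)
qed

definition fk :: "nat \<Rightarrow> complex \<Rightarrow> complex" where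
  "fk n u = of_real b ^ n * (ell ^^ n) u"
definition gk :: "nat \<Rightarrow> complex \<Rightarrow> complex" where
  "gk i u = fk (Suc i) u - fk i u"
definition kk :: "complex \<Rightarrow> complex" where
  "kk u = u + (\<Sum>i. gk i u)"
definition CC :: real where "CC = 2 / (b * (1 - qq))"

lemma gk_bound:
  assumes "norm u \<le> rr"
  shows "norm (gk i u) \<le> 2 / b * norm u ^ 2 * qq ^ i"
proof -
  define d where "d = (ell ^^ i) u"
  have dle: "norm d \<le> rho ^ i * norm u" unfolding d_def by (rule ell_iter_bound[OF assms])
  have dle2: "norm d \<le> b/2" using ell_iter_in[OF assms, of i] assms rr_le by (simp add: d_def)
  have bnz: "of_real b \<noteq> (0::complex)" using bpos by simp
  have "gk i u = of_real b ^ Suc i * (ell d - d / of_real b)"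
    using bnz by (simp add: gk_def fk_def d_def field_simps)
  then have "norm (gk i u) = b ^ Suc i * norm (ell d - d / of_real b)"
    using bpos by (simp add: norm_mult norm_power)
  also have "\<dots> \<le> b ^ Suc i * (2 * norm d ^ 2 / b ^ 2)"
    using ell_approx[OF dle2] bpos by (intro mult_left_mono) auto
  also have "\<dots> \<le> b ^ Suc i * (2 * (rho ^ i * norm u) ^ 2 / b ^ 2)"
    using dle bpos by (intro mult_left_mono divide_right_mono mult_left_mono power_mono) auto
  also have "\<dots> = 2 / b * norm u ^ 2 * qq ^ i"
    using bpos by (simp add: qq_def power_mult_distrib power2_eq_square field_simps power_mult[symmetric])
  finally show ?thesis .
qed

lemma summable_geo_qq: "summable (\<lambda>i. c * qq ^ i)"
  using qq_pos qq_lt1 by (intro summable_mult summable_geometric) simp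

lemma gk_summable_norm:
  assumes "norm u \<le> rr"
  shows "summable (\<lambda>i. norm (gk i u))"
  by (rule summable_comparison_test'[OF summable_geo_qq[of "2 / b * norm u ^ 2"]])
     (use gk_bound[OF assms] in auto)

lemma gk_sums: "norm u \<le> rr \<Longrightarrow> (\<lambda>i. gk i u) sums (kk u - u)"
  using gk_summable_norm summable_norm_cancel summable_sums by (fastforce simp: kk_def)

lemma fk_partial: "fk n u = u + (\<Sum>i<n. gk i u)"
  unfolding gk_def by (subst sum_lessThan_telescope) (simp add: fk_def)

lemma fk_lim: "norm u \<le> rr \<Longrightarrow> (\<lambda>n. fk n u) \<longlonglongrightarrow> kk u"
proof -
  assume a: "norm u \<le> rr"
  have "(\<lambda>n. u + (\<Sum>i<n. gk i u)) \<longlonglongrightarrow> u + (kk u - u)"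
    using gk_sums[OF a] by (intro tendsto_add tendsto_const) (simp add: sums_def)
  then show ?thesis by (simp add: fk_partial)
qed

lemma kk_0 [simp]: "kk 0 = 0"
proof -
  have "fk n 0 = 0" for n
  proof -
    have "(ell ^^ n) 0 = 0" by (induction n) auto
    then show ?thesis by (simp add: fk_def)
  qed
  then have "(\<lambda>n. fk n 0) \<longlonglongrightarrow> 0" by simp
  moreover have "(\<lambda>n. fk n 0) \<longlonglongrightarrow> kk 0" using fk_lim rr_pos by simp
  ultimately show ?thesis using LIMSEQ_unique by blast
qed

lemma kk_near:
  assumes "norm u \<le> rr"
  shows "norm (kk u - u) \<le> CC * norm u ^ 2"
proof -
  have "norm (kk u - u) = norm (\<Sum>i. gk i u)" by (simp add: kk_def)
  also have "\<dots> \<le> (\<Sum>i. norm (gk i u))" by (rule summable_norm[OF gk_summable_norm[OF assms]])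
  also have "\<dots> \<le> (\<Sum>i. 2 / b * norm u ^ 2 * qq ^ i)"
    by (rule suminf_le[OF gk_bound[OF assms] gk_summable_norm[OF assms] summable_geo_qq])
  also have "\<dots> = 2 / b * norm u ^ 2 * (1 / (1 - qq))"
    using qq_pos qq_lt1 by (subst suminf_mult) (auto simp: suminf_geometric)
  also have "\<dots> = CC * norm u ^ 2" by (simp add: CC_def)
  finally show ?thesis .
qed

lemma kk_func:
  assumes "norm u \<le> rr"
  shows "kk (ell u) = kk u / of_real b"
proof -
  have e: "norm (ell u) \<le> rr" using ell_contr[OF assms] rho_lt1 rho_pos assms
    by (smt (verit, best) mult_left_le_one_le norm_ge_zero)
  have "fk n (ell u) = fk (Suc n) u / of_real b" for n
    using bpos by (simp add: fk_def funpow_Suc_right del: funpow.simps)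
  then have "(\<lambda>n. fk n (ell u)) = (\<lambda>n. fk (Suc n) u / of_real b)" by auto
  moreover have "(\<lambda>n. fk n (ell u)) \<longlonglongrightarrow> kk (ell u)" by (rule fk_lim[OF e])
  moreover have "(\<lambda>n. fk (Suc n) u / of_real b) \<longlonglongrightarrow> kk u / of_real b"
    using LIMSEQ_Suc[OF fk_lim[OF assms]] bpos by (intro tendsto_divide tendsto_const) auto
  ultimately show ?thesis using LIMSEQ_unique by metis
qed

lemma kk_holo: "kk holomorphic_on ball 0 rr"
proof -
  have ul: "uniform_limit (cball 0 rr) (\<lambda>n u. \<Sum>i<n. gk i u) (\<lambda>u. \<Sum>i. gk i u) sequentially"
  proof (rule Weierstrass_m_test[OF _ summable_geo_qq[of "2 / b * rr ^ 2"]])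
    fix n u assume u: "u \<in> cball (0::complex) rr"
    then have "norm u \<le> rr" by simp
    have "norm (gk n u) \<le> 2 / b * norm u ^ 2 * qq ^ n" using gk_bound[OF \<open>norm u \<le> rr\<close>] .
    also have "\<dots> \<le> 2 / b * rr ^ 2 * qq ^ n"
      using \<open>norm u \<le> rr\<close> bpos qq_pos
      by (intro mult_right_mono mult_left_mono power_mono) auto
    finally show "norm (gk n u) \<le> 2 / b * rr ^ 2 * qq ^ n" .
  qed
  have hg: "(\<lambda>u. gk i u) holomorphic_on cball 0 rr" for i
    unfolding gk_def fk_def by (intro holomorphic_intros ell_iter_holo)
  have "eventually (\<lambda>n. continuous_on (cball 0 rr) (\<lambda>u. \<Sum>i<n. gk i u) \<and>
          (\<lambda>u. \<Sum>i<n. gk i u) holomorphic_on ball 0 rr) sequentially"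
  proof (intro always_eventually allI conjI)
    fix n
    have h: "(\<lambda>u. \<Sum>i<n. gk i u) holomorphic_on cball 0 rr" by (intro holomorphic_intros hg)
    then show "continuous_on (cball 0 rr) (\<lambda>u. \<Sum>i<n. gk i u)" by (rule holomorphic_on_imp_continuous_on)
    show "(\<lambda>u. \<Sum>i<n. gk i u) holomorphic_on ball 0 rr" by (rule holomorphic_on_subset[OF h]) auto
  qed
  then obtain "(\<lambda>u. \<Sum>i. gk i u) holomorphic_on ball 0 rr"
    using holomorphic_uniform_limit[OF _ ul] by auto
  then show ?thesis unfolding kk_def [abs_def] by (intro holomorphic_intros)
qed

lemma kk_deriv: "(kk has_field_derivative 1) (at 0)"
proof -
  have "((\<lambda>y. (kk y - kk 0) / (y - 0) - 1) \<longlongrightarrow> 0) (at 0)"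
  proof (rule Lim_null_comparison)
    have "eventually (\<lambda>y. y \<in> ball 0 rr \<and> y \<noteq> 0) (at (0::complex))"
      using rr_pos unfolding eventually_at by (intro exI[of _ rr]) (auto simp: dist_norm)
    then show "eventually (\<lambda>y. norm ((kk y - kk 0) / (y - 0) - 1) \<le> CC * norm y) (at 0)"
    proof (rule eventually_mono)
      fix y :: complex assume y': "y \<in> ball 0 rr \<and> y \<noteq> 0"
      then have y: "y \<in> ball 0 rr" by simp
      show "norm ((kk y - kk 0) / (y - 0) - 1) \<le> CC * norm y"
      proof (cases "y = 0")
        case True then show ?thesis using y' by simp
      next
        case False
        have "(kk y - kk 0) / (y - 0) - 1 = (kk y - y) / y" using False by (simp add: field_simps)
        then have "norm ((kk y - kk 0) / (y - 0) - 1) = norm (kk y - y) / norm y" by (simp add: norm_divide)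
        also have "\<dots> \<le> CC * norm y ^ 2 / norm y"
          using kk_near[of y] y False by (intro divide_right_mono) auto
        also have "\<dots> = CC * norm y" using False by (simp add: power2_eq_square)
        finally show ?thesis .
      qed
    qed
    show "((\<lambda>y. CC * norm y) \<longlongrightarrow> 0) (at (0::complex))"
      by (rule tendsto_eq_intros | simp)+
  qed
  then have "((\<lambda>y. (kk y - kk 0) / (y - 0)) \<longlongrightarrow> 1) (at 0)"
    by (simp only: LIM_zero_iff)
  then show ?thesis by (simp add: has_field_derivative_iff)
qed

end


context koen begin

lemma local_inverse_exists:
  "\<exists>r1 eps phi. 0 < r1 \<and> r1 \<le> rr \<and> inj_on kk (ball 0 r1) \<and> 0 < eps \<and>
     phi holomorphic_on ball 0 eps \<and> (\<forall>z\<in>ball 0 eps. phi z \<in> ball 0 r1 \<and> kk (phi z) = z) \<and>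
     (phi has_field_derivative 1) (at 0)"
proof -
  have dk: "deriv kk 0 = 1" using kk_deriv by (rule DERIV_imp_deriv)
  have z0: "0 \<in> ball (0::complex) rr" using rr_pos by simp
  have dnz: "deriv kk 0 \<noteq> 0" using dk by simp
  obtain r1 where r1: "r1 > 0" "ball (0::complex) r1 \<subseteq> ball 0 rr" "inj_on kk (ball 0 r1)"
    using has_complex_derivative_locally_injective[OF kk_holo z0 open_ball dnz] by metis
  have r1le: "r1 \<le> rr" using r1(1,2) ball_subset_ball_iff[of "0::complex" r1 0 rr] by simp
  have hol: "kk holomorphic_on ball 0 r1" using kk_holo r1(2) by (rule holomorphic_on_subset)
  obtain g where g: "g holomorphic_on (kk ` ball 0 r1)"
      "\<And>z. z \<in> ball 0 r1 \<Longrightarrow> deriv kk z * deriv g (kk z) = 1"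
      "\<And>z. z \<in> ball 0 r1 \<Longrightarrow> g (kk z) = z"
    using holomorphic_has_inverse[OF hol open_ball r1(3)] by metis
  have opV: "open (kk ` ball 0 r1)" by (rule open_mapping_thm3[OF hol open_ball r1(3)])
  have zV: "0 \<in> kk ` ball 0 r1" using r1(1) by (metis centre_in_ball image_eqI kk_0)
  obtain eps where eps: "eps > 0" "ball 0 eps \<subseteq> kk ` ball 0 r1"
    using opV zV open_contains_ball by blast
  have dg: "deriv g 0 = 1" using g(2)[of 0] r1(1) dk by simp
  have "g field_differentiable at 0"
    using holomorphic_on_imp_differentiable_at[OF g(1) opV zV] .
  then have gd: "(g has_field_derivative 1) (at 0)"
    using DERIV_deriv_iff_field_differentiable dg by metis
  have gin: "\<forall>z\<in>ball 0 eps. g z \<in> ball 0 r1 \<and> kk (g z) = z"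
  proof
    fix z :: complex assume "z \<in> ball 0 eps"
    then obtain w where w: "w \<in> ball 0 r1" "z = kk w" using eps(2) by blast
    then show "g z \<in> ball 0 r1 \<and> kk (g z) = z" using g(3) by simp
  qed
  show ?thesis
    using r1 r1le eps gd gin holomorphic_on_subset[OF g(1) eps(2)] by blast
qed

end

locale koen2 = koen +
  fixes r1 eps :: real and phi :: "complex \<Rightarrow> complex"
  assumes r1_pos: "0 < r1" and r1_le: "r1 \<le> rr" and kk_inj: "inj_on kk (ball 0 r1)"
    and eps_pos: "0 < eps" and phi_holo: "phi holomorphic_on ball 0 eps"
    and phi_in: "\<And>z. z \<in> ball 0 eps \<Longrightarrow> phi z \<in> ball 0 r1 \<and> kk (phi z) = z"
    and phi_deriv: "(phi has_field_derivative 1) (at 0)"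
begin

lemma phi_0 [simp]: "phi 0 = 0"
proof -
  have "phi 0 \<in> ball 0 r1" "kk (phi 0) = kk 0" using phi_in[of 0] eps_pos by auto
  then show ?thesis using kk_inj r1_pos by (auto simp: inj_on_def)
qed

lemma ell_small: "u \<in> ball 0 r1 \<Longrightarrow> ell u \<in> ball 0 r1"
proof -
  assume u: "u \<in> ball 0 r1"
  then have "norm u \<le> rr" using r1_le by simp
  then have "norm (ell u) \<le> rho * norm u" by (rule ell_contr)
  also have "\<dots> \<le> norm u" using rho_lt1 rho_pos by (simp add: mult_left_le_one_le)
  finally show ?thesis using u by simp
qed

lemma ee_ell: "norm u < b \<Longrightarrow> ee (ell u) = u"
proof -
  assume "norm u < b"
  then have "norm (u / of_real b) < 1" using bpos by (simp add: norm_divide)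
  then have "1 + u / of_real b \<noteq> 0"
    by (metis add_eq_0_iff norm_minus_cancel norm_one less_irrefl)
  then show ?thesis using bpos by (simp add: ee_def ell_def field_simps)
qed

lemma phi_func:
  assumes z: "z \<in> ball 0 eps"
  shows "phi z = ee (phi (z / of_real b))"
proof -
  have "norm z < eps * b" using z b1 eps_pos by simp (smt (verit) mult_less_cancel_left1)
  then have zb: "z / of_real b \<in> ball 0 eps" using bpos by (simp add: norm_divide divide_less_eq)
  have p: "phi z \<in> ball 0 r1" "kk (phi z) = z" using phi_in[OF z] by auto
  have p2: "phi (z / of_real b) \<in> ball 0 r1" "kk (phi (z / of_real b)) = z / of_real b"
    using phi_in[OF zb] by auto
  have "norm (phi z) \<le> rr" using p(1) r1_le by simp
  then have "kk (ell (phi z)) = z / of_real b" using kk_func p(2) by simp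
  then have "ell (phi z) = phi (z / of_real b)"
    using kk_inj ell_small[OF p(1)] p2 by (auto simp: inj_on_def)
  moreover have "norm (phi z) < b" using p(1) r1_le rr_le bpos by simp
  ultimately show ?thesis using ee_ell by metis
qed

end


context koen begin
lemma ee_holo: "ee holomorphic_on A"
  unfolding ee_def [abs_def] by (intro holomorphic_intros)
lemma ee_iter_holo: "(ee ^^ n) holomorphic_on A"
proof (induction n)
  case 0 then show ?case by (simp add: id_def)
next
  case (Suc n)
  have "(ee \<circ> (ee ^^ n)) holomorphic_on A"
    by (rule holomorphic_on_compose_gen[OF Suc ee_holo]) auto
  then show ?case by (simp add: o_def)
qed
end

context koen2 begin

definition FF :: "nat \<Rightarrow> complex \<Rightarrow> complex" where
  "FF n z = (ee ^^ n) (phi (z / of_real b ^ n))"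

definition TT :: "complex \<Rightarrow> complex" where
  "TT z = FF (LEAST n. norm z < b ^ n * eps) z"

lemma bn_pos: "0 < b ^ n" using bpos by simp

lemma div_bn_in: "norm (z::complex) < b ^ n * eps \<Longrightarrow> z / of_real b ^ n \<in> ball 0 eps"
proof -
  assume z: "norm z < b ^ n * eps"
  have "norm (z / of_real b ^ n) = norm z / b ^ n" using bpos by (simp add: norm_divide norm_power)
  also have "\<dots> < eps" using z bn_pos[of n] by (simp add: divide_less_eq mult.commute)
  finally show ?thesis by simp
qed

lemma FF_holo: "FF n holomorphic_on ball 0 (b ^ n * eps)"
proof -
  have "(\<lambda>z::complex. z / of_real b ^ n) holomorphic_on ball 0 (b ^ n * eps)"
    using bpos by (intro holomorphic_intros) simp
  moreover have "(\<lambda>z::complex. z / of_real b ^ n) ` ball 0 (b ^ n * eps) \<subseteq> ball 0 eps"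
    using div_bn_in by auto
  ultimately have "(phi \<circ> (\<lambda>z. z / of_real b ^ n)) holomorphic_on ball 0 (b ^ n * eps)"
    by (intro holomorphic_on_compose_gen[OF _ phi_holo])
  then have "((ee ^^ n) \<circ> (phi \<circ> (\<lambda>z. z / of_real b ^ n))) holomorphic_on ball 0 (b ^ n * eps)"
    by (intro holomorphic_on_compose_gen[OF _ ee_iter_holo]) auto
  then show ?thesis by (simp add: FF_def [abs_def] o_def)
qed

lemma FF_Suc: "norm (z::complex) < b ^ n * eps \<Longrightarrow> FF (Suc n) z = FF n z"
proof -
  assume z: "norm z < b ^ n * eps"
  have "z / of_real b ^ Suc n = (z / of_real b ^ n) / of_real b" by simp
  then have "FF (Suc n) z = (ee ^^ n) (ee (phi ((z / of_real b ^ n) / of_real b)))"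
    by (simp add: FF_def funpow_Suc_right mult.commute del: funpow.simps)
  also have "\<dots> = FF n z" using phi_func[OF div_bn_in[OF z]] by (simp add: FF_def)
  finally show ?thesis .
qed

lemma bn_mono: "n \<le> m \<Longrightarrow> b ^ n \<le> b ^ m" using b1 by (simp add: power_increasing)

lemma FF_mono: "n \<le> m \<Longrightarrow> norm (z::complex) < b ^ n * eps \<Longrightarrow> FF m z = FF n z"
proof (induction m rule: dec_induct)
  case base then show ?case by simp
next
  case (step m)
  have "b ^ n * eps \<le> b ^ m * eps" using bn_mono[OF step(1)] eps_pos by simp
  then have "norm z < b ^ m * eps" using step by simp
  then show ?case using FF_Suc step by simp
qed

lemma ex_n: "\<exists>n. norm (z::complex) < b ^ n * eps"
proof -
  obtain n where "norm z / eps < b ^ n" using real_arch_pow[OF b1] by blast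
  then show ?thesis using eps_pos by (auto simp: divide_less_eq)
qed

lemma TT_eq: "norm (z::complex) < b ^ n * eps \<Longrightarrow> TT z = FF n z"
proof -
  assume z: "norm z < b ^ n * eps"
  define N where "N = (LEAST n. norm z < b ^ n * eps)"
  have N1: "norm z < b ^ N * eps" unfolding N_def by (rule LeastI_ex[OF ex_n])
  have N2: "N \<le> n" unfolding N_def using z by (rule Least_le)
  show ?thesis using FF_mono[OF N2 N1] by (simp add: TT_def N_def)
qed

lemma TT_holo: "TT holomorphic_on UNIV"
  unfolding holomorphic_on_def
proof
  fix z :: complex
  obtain n where n: "norm z < b ^ n * eps" using ex_n by blast
  have "FF n field_differentiable at z"
    using holomorphic_on_imp_differentiable_at[OF FF_holo open_ball] n by simp
  moreover have "\<And>x'. x' \<in> UNIV \<Longrightarrow> dist x' z < b ^ n * eps - norm z \<Longrightarrow> FF n x' = TT x'"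
  proof -
    fix x' :: complex assume "x' \<in> UNIV" "dist x' z < b ^ n * eps - norm z"
    then have "norm x' < b ^ n * eps"
      by (smt (verit) dist_norm norm_triangle_ineq2 norm_minus_commute)
    then show "FF n x' = TT x'" using TT_eq by simp
  qed
  moreover have "0 < b ^ n * eps - norm z" using n by simp
  ultimately have "TT field_differentiable at z within UNIV"
    using field_differentiable_transform_within[of "b ^ n * eps - norm z" z UNIV "FF n" TT] by simp
  then show "TT field_differentiable at z within UNIV" by simp
qed

lemma TT_func: "TT (of_real b * z) = ee (TT z)"
proof -
  obtain n where n: "norm z < b ^ n * eps" using ex_n by blast
  have n2: "norm (of_real b * z) < b ^ Suc n * eps"
    using n bpos by (simp add: norm_mult)
  have "TT (of_real b * z) = FF (Suc n) (of_real b * z)" by (rule TT_eq[OF n2])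
  also have "\<dots> = ee (FF n z)"
    using bpos by (simp add: FF_def del: funpow.simps) (simp add: field_simps)
  also have "\<dots> = ee (TT z)" using TT_eq[OF n] by simp
  finally show ?thesis .
qed

lemma TT_0: "TT 0 = 0"
  using TT_eq[of 0 0] eps_pos by (simp add: FF_def)

lemma TT_deriv: "(TT has_field_derivative 1) (at 0)"
proof (rule has_field_derivative_transform_within_open[OF phi_deriv open_ball])
  show "0 \<in> ball (0::complex) eps" using eps_pos by simp
  fix x assume "x \<in> ball (0::complex) eps"
  then show "phi x = TT x" using TT_eq[of x 0] by (simp add: FF_def)
qed

end


context koen2 begin

lemma TT_unique:
  assumes hol: "T1 holomorphic_on UNIV"
    and fe: "\<And>z. T1 (of_real b * z) = ee (T1 z)"
    and t0: "T1 0 = 0"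
    and td: "(T1 has_field_derivative 1) (at 0)"
  shows "T1 w = TT w"
proof -
  have "isCont T1 0" using td by (rule DERIV_isCont)
  then have "T1 \<midarrow>0\<rightarrow> 0" using t0 by (simp add: isCont_def)
  then obtain d where d: "d > 0" "\<And>x. x \<noteq> 0 \<and> norm (x - 0) < d \<Longrightarrow> norm (T1 x - 0) < min r1 1"
    using LIM_D[of T1 0 0 "min r1 1"] r1_pos by auto
  define dd where "dd = min d eps"
  have dd: "dd > 0" using d eps_pos by (simp add: dd_def)
  have small: "norm (T1 x) < r1 \<and> norm (T1 x) < 1" if "norm x < dd" for x
  proof (cases "x = 0")
    case True then show ?thesis using t0 r1_pos by simp
  next
    case False then show ?thesis using d(2)[of x] that by (simp add: dd_def)
  qed
  have divb: "norm (x / of_real b) < dd" if "norm x < dd" for x :: complex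
  proof -
    have "norm (x / of_real b) = norm x / b" using bpos by (simp add: norm_divide)
    also have "\<dots> \<le> norm x" using b1 by (simp add: divide_le_eq) (smt (verit) mult_le_cancel_left1 norm_ge_zero)
    finally show ?thesis using that by simp
  qed
  define psi where "psi = (\<lambda>z. kk (T1 z))"
  have ell_T1: "ell (T1 x) = T1 (x / of_real b)" if x: "norm x < dd" for x
  proof -
    have xb: "norm (x / of_real b) < dd" by (rule divb[OF x])
    have "T1 x = T1 (of_real b * (x / of_real b))" using bpos by simp
    also have "\<dots> = of_real b * (exp (T1 (x / of_real b)) - 1)" using fe[of "x / of_real b"] by (simp only: ee_def)
    finally have e1: "T1 x = of_real b * (exp (T1 (x / of_real b)) - 1)" .
    have bnz: "(of_real b :: complex) \<noteq> 0" using bpos by simp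
    from e1 have "1 + T1 x / of_real b = exp (T1 (x / of_real b))" using bnz
      by (simp add: field_simps)
    moreover have "\<bar>Im (T1 (x / of_real b))\<bar> < 1"
      using small[OF xb] abs_Im_le_cmod le_less_trans by blast
    ultimately show ?thesis using pi_gt3 by (simp add: ell_def)
  qed
  have psi_func: "psi (x / of_real b) = psi x / of_real b" if x: "norm x < dd" for x
  proof -
    have "norm (T1 x) \<le> rr" using small[OF x] r1_le by simp
    then show ?thesis unfolding psi_def using kk_func ell_T1[OF x] by metis
  qed
  have psi_pow: "psi (x / of_real b ^ n) = psi x / of_real b ^ n" if x: "norm x < dd" for x n
  proof (induction n)
    case 0 then show ?case by simp
  next
    case (Suc n)
    have "norm (x / of_real b ^ n) < dd"
    proof (induction n)
      case 0 then show ?case using x by simp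
    next
      case (Suc n) then show ?case using divb[OF Suc] by (simp add: field_simps)
    qed
    then have "psi ((x / of_real b ^ n) / of_real b) = psi (x / of_real b ^ n) / of_real b"
      by (rule psi_func)
    then show ?case using Suc by (simp add: field_simps)
  qed
  have psi_d: "(psi has_field_derivative 1) (at 0)"
  proof -
    have "(kk \<circ> T1 has_field_derivative 1 * 1) (at 0)"
      by (rule DERIV_chain) (use kk_deriv t0 td in auto)
    then show ?thesis by (simp add: psi_def o_def)
  qed
  have psi0: "psi 0 = 0" by (simp add: psi_def t0)
  have psi_id: "psi x = x" if x: "norm x < dd" for x
  proof (cases "x = 0")
    case True then show ?thesis using psi0 by simp
  next
    case False
    have lim1: "((\<lambda>y. psi y / y) \<longlongrightarrow> 1) (at 0)"
      using psi_d psi0 by (simp add: has_field_derivative_iff)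
    define t where "t = (\<lambda>n. x * (1 / of_real b) ^ n)"
    have "t \<longlonglongrightarrow> x * 0"
      unfolding t_def using b1 by (intro tendsto_mult tendsto_const LIMSEQ_power_zero) (simp add: norm_divide)
    then have t0': "t \<longlonglongrightarrow> 0" by simp
    have tnz: "t n \<noteq> 0" for n using False bpos by (simp add: t_def)
    have "filterlim t (at 0) sequentially"
      by (rule filterlim_atI[OF t0']) (simp add: tnz)
    then have "(\<lambda>n. psi (t n) / t n) \<longlonglongrightarrow> 1"
      using lim1 filterlim_compose by blast
    moreover have "psi (t n) / t n = psi x / x" for n
    proof -
      have tn: "t n = x / of_real b ^ n" by (simp add: t_def power_divide)
      have cnz: "(of_real b :: complex) ^ n \<noteq> 0" using bpos by simp
      have "psi (t n) / t n = (psi x / of_real b ^ n) / (x / of_real b ^ n)"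
        using tn psi_pow[OF x, of n] by simp
      also have "\<dots> = psi x / x" using cnz False by (simp add: divide_simps)
      finally show ?thesis .
    qed
    ultimately have "psi x / x = 1" by (simp add: LIMSEQ_const_iff)
    then show ?thesis using False by (simp add: field_simps)
  qed
  have eq_small: "T1 x = TT x" if x: "x \<in> ball 0 dd" for x
  proof -
    have xe: "x \<in> ball 0 eps" using x by (simp add: dd_def)
    have "kk (T1 x) = kk (phi x)" using psi_id[of x] x phi_in[OF xe] by (simp add: psi_def)
    moreover have "T1 x \<in> ball 0 r1" using small[of x] x by simp
    ultimately have "T1 x = phi x" using kk_inj phi_in[OF xe] by (auto simp: inj_on_def)
    then show ?thesis using TT_eq[of x 0] xe by (simp add: FF_def)
  qed
  show ?thesis
    by (rule analytic_continuation_open[of "ball 0 dd" UNIV T1 TT])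
       (use dd eq_small hol TT_holo in auto)
qed

lemma TT_real: "TT (of_real x) = of_real (Re (TT (of_real x)))"
proof -
  define T1 where "T1 = cnj \<circ> TT \<circ> cnj"
  have "T1 holomorphic_on UNIV"
    unfolding T1_def by (rule holomorphic_on_compose_cnj_cnj) (use TT_holo in auto)
  moreover have "T1 (of_real b * z) = ee (T1 z)" for z
    by (simp add: T1_def TT_func ee_def exp_cnj)
  moreover have "T1 0 = 0" by (simp add: T1_def TT_0)
  moreover have "(T1 has_field_derivative 1) (at 0)"
  proof -
    have "(TT has_field_derivative 1) (at (cnj 0))" using TT_deriv by simp
    then show ?thesis unfolding T1_def using has_field_derivative_cnj_cnj by fastforce
  qed
  ultimately have "T1 (of_real x) = TT (of_real x)" by (rule TT_unique)
  then have "cnj (TT (of_real x)) = TT (of_real x)" by (simp add: T1_def)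
  then show ?thesis by (metis Reals_cnj_iff complex_is_Real_iff of_real_Re)
qed

end


locale rs =
  fixes s D :: "real \<Rightarrow> real" and b lam :: real
  assumes b1: "1 < b" and lam_pos: "0 < lam" and fix_b: "lam * exp b = b"
    and sfe: "\<And>x. s (b * x) = lam * exp (s x)"
    and sder: "\<And>x. (s has_real_derivative D x) (at x)"
    and Dcont: "isCont D 0" and D0: "D 0 = 1" and s0: "s 0 = b"
begin

lemma bpos: "0 < b" using b1 by simp

lemma deriv_rel: "b * D (b * x) = s (b * x) * D x"
proof -
  have d1: "((\<lambda>x. s (b * x)) has_real_derivative D (b * x) * b) (at x)"
    using DERIV_chain2[OF sder, of "\<lambda>x. b * x" b x] by (auto intro: derivative_eq_intros)
  have d2: "((\<lambda>x. lam * exp (s x)) has_real_derivative lam * (exp (s x) * D x)) (at x)"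
    using DERIV_cmult[OF DERIV_fun_exp[OF sder[of x]], of lam] by (simp add: mult_ac)
  have "(\<lambda>x. s (b * x)) = (\<lambda>x. lam * exp (s x))" using sfe by auto
  then have "D (b * x) * b = lam * (exp (s x) * D x)" using d1 d2 DERIV_unique by metis
  then show ?thesis by (simp add: sfe mult.commute mult.left_commute)
qed

lemma s_pos: "0 < s x"
proof -
  have "s x = s (b * (x / b))" using bpos by simp
  also have "\<dots> = lam * exp (s (x / b))" by (rule sfe)
  finally show ?thesis using lam_pos by simp
qed

lemma D_rel': "D y = s y * D (y / b) / b"
  using deriv_rel[of "y / b"] bpos by (simp add: field_simps)

lemma s_cont: "isCont s x" using sder by (rule DERIV_isCont)

lemma D_props: "(\<forall>y. \<bar>y\<bar> \<le> b ^ n * d \<longrightarrow> 0 < D y) \<and> (\<forall>y. 0 \<le> y \<and> y \<le> b ^ n * d \<longrightarrow> 1/2 \<le> D y)"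
  if d: "0 < d" "\<And>y. \<bar>y\<bar> \<le> d \<Longrightarrow> 1/2 \<le> D y" for d n
proof (induction n)
  case 0 then show ?case using d by force
next
  case (Suc n)
  have A: "\<forall>y. \<bar>y\<bar> \<le> b ^ Suc n * d \<longrightarrow> 0 < D y"
  proof safe
    fix y assume y: "\<bar>y\<bar> \<le> b ^ Suc n * d"
    have "\<bar>y / b\<bar> \<le> b ^ n * d" using y bpos by (simp add: divide_le_eq mult_ac)
    then have "0 < D (y / b)" using Suc by blast
    then show "0 < D y" using D_rel'[of y] s_pos[of y] bpos by simp
  qed
  have B: "\<forall>y. 0 \<le> y \<and> y \<le> b ^ Suc n * d \<longrightarrow> 1/2 \<le> D y"
  proof safe
    fix y assume y: "0 \<le> y" "y \<le> b ^ Suc n * d"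
    have yb: "0 \<le> y / b" "y / b \<le> b ^ n * d" using y bpos by (auto simp: divide_le_eq mult_ac)
    have Dyb: "1/2 \<le> D (y / b)" using Suc yb by blast
    have "b \<le> s (y / b)"
    proof (cases "y / b = 0")
      case True then show ?thesis using s0 by (metis order_refl)
    next
      case False
      then have pos: "0 < y / b" using yb(1) by linarith
      obtain z where z: "0 < z" "z < y / b" "s (y / b) - s 0 = (y / b - 0) * D z"
        using MVT2[OF pos, of s D] sder by blast
      have "1/2 \<le> D z" using Suc z yb by auto
      then have "0 \<le> (y / b - 0) * D z" using pos by (intro mult_nonneg_nonneg) auto
      then show ?thesis using z s0 by simp
    qed
    then have "exp b \<le> exp (s (y / b))" by simp
    then have "lam * exp b \<le> lam * exp (s (y / b))" using lam_pos by (simp add: mult_left_mono)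
    then have "b \<le> s y"
      using sfe[of "y / b"] bpos fix_b by simp
    then have "b * (1/2) \<le> s y * D (y / b)"
      using Dyb bpos by (intro mult_mono) auto
    then show "1/2 \<le> D y" using D_rel'[of y] bpos by (simp add: le_divide_eq)
  qed
  show ?case using A B by blast
qed

lemma D_global: "0 < D y" "0 \<le> y \<Longrightarrow> 1/2 \<le> D y"
proof -
  have "D \<midarrow>0\<rightarrow> 1" using Dcont D0 by (simp add: isCont_def)
  then obtain d0 where d0: "d0 > 0" "\<And>x. x \<noteq> 0 \<and> norm (x - 0) < d0 \<Longrightarrow> norm (D x - 1) < 1/2"
    using LIM_D[OF \<open>D \<midarrow>0\<rightarrow> 1\<close>, of "1/2"] by auto
  define d where "d = d0 / 2"
  have dpos: "0 < d" using d0 by (simp add: d_def)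
  have dD: "1/2 \<le> D y" if "\<bar>y\<bar> \<le> d" for y
  proof (cases "y = 0")
    case True then show ?thesis using D0 by simp
  next
    case False
    then have "norm (D y - 1) < 1/2" using d0(2)[of y] that d0(1) by (simp add: d_def)
    then have "\<bar>D y - 1\<bar> < 1/2" by simp
    then show ?thesis by linarith
  qed
  obtain n where n: "\<bar>y\<bar> / d < b ^ n" using real_arch_pow[OF b1] by blast
  then have yn: "\<bar>y\<bar> \<le> b ^ n * d" using dpos by (simp add: divide_less_eq less_imp_le)
  show "0 < D y" using D_props[OF dpos dD, of n] yn by blast
  show "0 \<le> y \<Longrightarrow> 1/2 \<le> D y" using D_props[OF dpos dD, of n] yn by auto
qed

lemma s_strict: "x < y \<Longrightarrow> s x < s y"
  using DERIV_pos_imp_increasing[of x y s] sder D_global by blast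

lemma s_inj: "s x = s y \<Longrightarrow> x = y"
  using s_strict by (metis less_irrefl linorder_neqE_linordered_idom)

lemma s_growth: "0 \<le> x \<Longrightarrow> x \<le> y \<Longrightarrow> (y - x) / 2 \<le> s y - s x"
proof (cases "x = y")
  case True then show ?thesis by simp
next
  case False
  assume xy: "0 \<le> x" "x \<le> y"
  then have lt: "x < y" using False by simp
  obtain z where z: "x < z" "z < y" "s y - s x = (y - x) * D z"
    using MVT2[OF lt, of s D] sder by blast
  have "1/2 \<le> D z" using D_global(2)[of z] z xy by simp
  then have "(y - x) * (1/2) \<le> (y - x) * D z" using lt by (intro mult_left_mono) auto
  then show ?thesis using z by simp
qed

end


lemma exp_neg_lim:
  fixes g :: "real \<Rightarrow> real"
  assumes "filterlim g at_top at_top"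
  shows "((\<lambda>x. exp (- g x)) \<longlongrightarrow> 0) at_top"
proof -
  have "filterlim (\<lambda>x. - g x) at_bot at_top"
    using assms by (simp add: filterlim_uminus_at_bot)
  then show ?thesis using filterlim_compose[OF exp_at_bot] by blast
qed

context rs begin

definition sinv :: "real \<Rightarrow> real" where "sinv y = (THE x. s x = y)"

lemma sinv_unfold: "sinv y = (THE x. s x = y)" by (simp add: sinv_def)

lemma sinv: assumes "b \<le> y" shows "s (sinv y) = y" "0 \<le> sinv y"
proof -
  have "s 0 \<le> y" using assms s0 by simp
  moreover have "y \<le> s (2 * (y - b))"
    using s_growth[of 0 "2 * (y - b)"] assms s0 by simp
  ultimately obtain x where x: "0 \<le> x" "x \<le> 2 * (y - b)" "s x = y"
    using IVT[of s 0 y "2 * (y - b)"] s_cont assms by auto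
  have "sinv y = x" unfolding sinv_def
    by (rule the_equality) (use x s_inj in auto)
  then show "s (sinv y) = y" "0 \<le> sinv y" using x by auto
qed

lemma sinv_at_top: "filterlim sinv at_top at_top"
  unfolding filterlim_at_top
proof
  fix Z :: real
  have "eventually (\<lambda>y. max b (s Z) \<le> y) at_top" by (rule eventually_ge_at_top)
  then show "eventually (\<lambda>y. Z \<le> sinv y) at_top"
  proof (rule eventually_mono)
    fix y assume y: "max b (s Z) \<le> y"
    show "Z \<le> sinv y"
    proof (rule ccontr)
      assume "\<not> Z \<le> sinv y"
      then have "s (sinv y) < s Z" using s_strict by simp
      then show False using sinv(1)[of y] y by simp
    qed
  qed
qed

lemma s_exp: "s u = lam * exp (s (u / b))"
  using sfe[of "u / b"] bpos by simp

lemma key1: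
  assumes c: "0 < c" "c < 1"
  shows "((\<lambda>u. s (c * u) / s u) \<longlongrightarrow> 0) at_top"
proof -
  define k where "k = (1 - c) / (2 * b)"
  have kpos: "0 < k" using c bpos by (simp add: k_def)
  have lim: "((\<lambda>u. exp (- (k * u))) \<longlongrightarrow> 0) at_top"
    by (rule exp_neg_lim, rule filterlim_tendsto_pos_mult_at_top[OF tendsto_const kpos filterlim_ident])
  show ?thesis
  proof (rule Lim_null_comparison[OF _ lim])
    have "eventually (\<lambda>u::real. 0 \<le> u) at_top" by (rule eventually_ge_at_top)
    then show "eventually (\<lambda>u. norm (s (c * u) / s u) \<le> exp (- (k * u))) at_top"
    proof (rule eventually_mono)
      fix u :: real assume u: "0 \<le> u"
      have "s (c * u) / s u = exp (s (c * u / b) - s (u / b))"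
        using lam_pos by (simp add: s_exp[of "c * u"] s_exp[of u] exp_diff)
      moreover have "(u / b - c * u / b) / 2 \<le> s (u / b) - s (c * u / b)"
        using s_growth[of "c * u / b" "u / b"] u c bpos
        by (simp add: divide_right_mono mult_left_le_one_le)
      moreover have "(u / b - c * u / b) / 2 = k * u" using bpos by (simp add: k_def field_simps)
      ultimately have "s (c * u) / s u \<le> exp (- (k * u))" by simp
      moreover have "0 < s (c * u) / s u" using s_pos by simp
      ultimately show "norm (s (c * u) / s u) \<le> exp (- (k * u))" by simp
    qed
  qed
qed

lemma key2:
  assumes d: "0 < d" "d < 1" and g: "0 < \<gamma>"
  shows "((\<lambda>v. s (d * v) powr \<gamma> / s v) \<longlongrightarrow> 0) at_top"
proof -
  define G where "G = (\<lambda>w. s w - \<gamma> * s (d * w))"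
  have ev: "eventually (\<lambda>w. s (d * w) / s w \<le> 1 / (2 * \<gamma>)) at_top"
  proof -
    have "1 / (2 * \<gamma>) > 0" using g by simp
    then have "eventually (\<lambda>w. norm (s (d * w) / s w - 0) < 1 / (2 * \<gamma>)) at_top"
      using key1[OF d] by (simp add: tendsto_iff dist_norm del: norm_divide)
    then show ?thesis by (rule eventually_mono) (use s_pos in \<open>simp add: abs_of_pos\<close>)
  qed
  have GG: "filterlim G at_top at_top"
  proof (rule filterlim_at_top_mono[of "\<lambda>w. w / 4"])
    show "filterlim (\<lambda>w::real. w / 4) at_top at_top"
      by (rule filterlim_tendsto_pos_mult_at_top[of "\<lambda>_. 1/4" "1/4" _ "\<lambda>w. w", simplified])
         (simp_all add: filterlim_ident)
    show "eventually (\<lambda>w. w / 4 \<le> G w) at_top"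
      using ev eventually_ge_at_top[of 0]
    proof eventually_elim
      case (elim w)
      have sp: "0 < s w" "0 < s (d * w)" using s_pos by auto
      then have "s (d * w) \<le> s w / (2 * \<gamma>)" using elim(1) g by (simp add: divide_le_eq field_simps)
      then have "\<gamma> * s (d * w) \<le> s w / 2" using g by (simp add: field_simps)
      moreover have "w / 2 \<le> s w - b" using s_growth[of 0 w] elim(2) s0 by simp
      ultimately show ?case using bpos unfolding G_def by simp
    qed
  qed
  have Gb: "filterlim (\<lambda>v. G (v / b)) at_top at_top"
  proof -
    have "filterlim (\<lambda>v::real. v / b) at_top at_top"
      by (rule filterlim_tendsto_pos_mult_at_top[of "\<lambda>_. 1/b" "1/b" _ "\<lambda>w. w", simplified])
         (simp_all add: filterlim_ident bpos)
    then show ?thesis using filterlim_compose[OF GG] by blast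
  qed
  define C where "C = (\<gamma> - 1) * ln lam"
  have "filterlim (\<lambda>v. G (v / b) - C) at_top at_top"
    by (rule filterlim_tendsto_add_at_top[of "\<lambda>_. - C" "- C", simplified add.commute, OF tendsto_const Gb, simplified]) 
  then have lim: "((\<lambda>v. exp (- (G (v / b) - C))) \<longlongrightarrow> 0) at_top" by (rule exp_neg_lim)
  have eq: "s (d * v) powr \<gamma> / s v = exp (- (G (v / b) - C))" for v
  proof -
    have sd: "s (d * v) = exp (ln lam + s (d * (v / b)))"
      using s_exp[of "d * v"] lam_pos by (simp add: exp_add)
    have sv: "s v = exp (ln lam + s (v / b))"
      using s_exp[of v] lam_pos by (simp add: exp_add)
    have "s (d * v) powr \<gamma> = exp (\<gamma> * (ln lam + s (d * (v / b))))"
      using sd by (simp add: powr_def s_pos)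
    then show ?thesis using sv
      by (simp add: G_def C_def exp_diff[symmetric] algebra_simps)
  qed
  show ?thesis using lim by (simp add: eq)
qed

lemma main_rs:
  shows "\<forall>r>0. ((\<lambda>x. s (b powr (- r) * sinv x) / x) \<longlongrightarrow> 0) at_top"
    and "\<forall>r s' \<gamma>. 0 < r \<longrightarrow> r < s' \<longrightarrow> 0 < \<gamma> \<longrightarrow>
       ((\<lambda>x. s (b powr (- s') * sinv x) powr \<gamma> / s (b powr (- r) * sinv x)) \<longlongrightarrow> 0) at_top"
proof -
  have cprop: "0 < b powr (- r) \<and> b powr (- r) < 1" if "0 < r" for r
  proof
    show "0 < b powr (- r)" using bpos by simp
    have "b powr (- r) < b powr 0" using that b1 by (intro powr_less_mono) auto
    then show "b powr (- r) < 1" using bpos by simp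
  qed
  {
    fix r :: real assume r: "0 < r"
    define c where "c = b powr (- r)"
    have c: "0 < c" "c < 1" using cprop[OF r] by (auto simp: c_def)
    have lim: "((\<lambda>x. s (c * sinv x) / s (sinv x)) \<longlongrightarrow> 0) at_top"
      using filterlim_compose[OF key1[OF c] sinv_at_top] by simp
    have ev: "eventually (\<lambda>x. s (c * sinv x) / s (sinv x) = s (c * sinv x) / x) at_top"
      using eventually_ge_at_top[of b] by (rule eventually_mono) (simp add: sinv)
    have "((\<lambda>x. s (c * sinv x) / x) \<longlongrightarrow> 0) at_top"
      using lim tendsto_cong[OF ev] by blast
    then have "((\<lambda>x. s (b powr (- r) * sinv x) / x) \<longlongrightarrow> 0) at_top"
      by (simp add: c_def)
  }
  then show "\<forall>r>0. ((\<lambda>x. s (b powr (- r) * sinv x) / x) \<longlongrightarrow> 0) at_top" by blast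
  {
    fix r s' \<gamma> :: real assume r: "0 < r" "r < s'" and g: "0 < \<gamma>"
    define c where "c = b powr (- r)"
    define d where "d = b powr (- (s' - r))"
    have c: "0 < c" "c < 1" using cprop[OF r(1)] by (auto simp: c_def)
    have d: "0 < d" "d < 1" using cprop[of "s' - r"] r by (auto simp: d_def)
    have cd: "b powr (- s') = d * c" unfolding c_def d_def using bpos by (simp add: powr_add[symmetric])
    have v: "filterlim (\<lambda>x. c * sinv x) at_top at_top"
      by (rule filterlim_tendsto_pos_mult_at_top[OF tendsto_const c(1) sinv_at_top])
    have "((\<lambda>x. s (d * (c * sinv x)) powr \<gamma> / s (c * sinv x)) \<longlongrightarrow> 0) at_top"
      using filterlim_compose[OF key2[OF d g] v] by simp
    then have "((\<lambda>x. s (b powr (- s') * sinv x) powr \<gamma> / s (b powr (- r) * sinv x)) \<longlongrightarrow> 0) at_top"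
      by (simp add: cd c_def mult.assoc)
  }
  then show "\<forall>r s' \<gamma>. 0 < r \<longrightarrow> r < s' \<longrightarrow> 0 < \<gamma> \<longrightarrow>
       ((\<lambda>x. s (b powr (- s') * sinv x) powr \<gamma> / s (b powr (- r) * sinv x)) \<longlongrightarrow> 0) at_top"
    by blast
qed

end


context koen begin
lemma T_exists:
  "\<exists>T. T holomorphic_on UNIV \<and> (\<forall>z. T (of_real b * z) = ee (T z)) \<and> T 0 = 0 \<and>
     (T has_field_derivative 1) (at 0) \<and> (\<forall>x. T (of_real x) = of_real (Re (T (of_real x)))) \<and>
     (\<forall>T1. T1 holomorphic_on UNIV \<and> (\<forall>z. T1 (of_real b * z) = ee (T1 z)) \<and> T1 0 = 0 \<and>
        (T1 has_field_derivative 1) (at 0) \<longrightarrow> T1 = T)"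
proof -
  obtain r1 eps phi where props: "0 < r1" "r1 \<le> rr" "inj_on kk (ball 0 r1)" "0 < eps"
     "phi holomorphic_on ball 0 eps" "\<forall>z\<in>ball 0 eps. phi z \<in> ball 0 r1 \<and> kk (phi z) = z"
     "(phi has_field_derivative 1) (at 0)"
    using local_inverse_exists by blast
  interpret k2: koen2 b r1 eps phi
    by unfold_locales (use props b1 in auto)
  show ?thesis
  proof (intro exI[of _ k2.TT] conjI allI impI)
    show "k2.TT holomorphic_on UNIV" by (rule k2.TT_holo)
    show "k2.TT (of_real b * z) = ee (k2.TT z)" for z by (rule k2.TT_func)
    show "k2.TT 0 = 0" by (rule k2.TT_0)
    show "(k2.TT has_field_derivative 1) (at 0)" by (rule k2.TT_deriv)
    show "k2.TT (of_real x) = of_real (Re (k2.TT (of_real x)))" for x by (rule k2.TT_real)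
    fix T1 assume "T1 holomorphic_on UNIV \<and> (\<forall>z. T1 (of_real b * z) = ee (T1 z)) \<and> T1 0 = 0 \<and>
        (T1 has_field_derivative 1) (at 0)"
    then show "T1 = k2.TT" using k2.TT_unique by blast
  qed
qed
end

lemma fixB_prop:
  assumes lam: "0 < lam" "lam < exp (-1)"
  shows "1 < fixB lam" "lam * exp (fixB lam) = fixB lam"
proof -
  define f where "f = (\<lambda>x::real. lam * exp x - x)"
  have fd: "(f has_real_derivative lam * exp x - 1) (at x)" for x
    unfolding f_def by (auto intro!: derivative_eq_intros)
  have f1: "f 1 < 0"
  proof -
    have "lam * exp 1 < exp (-1) * exp 1" using lam by simp
    also have "\<dots> = 1" by (simp add: exp_minus)
    finally show ?thesis by (simp add: f_def)
  qed
  define X where "X = 4 / lam + 1"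
  have X1: "1 < X" using lam by (simp add: X_def)
  have fX: "0 \<le> f X"
  proof -
    have e: "1 + X / 2 \<le> exp (X / 2)" by (rule exp_ge_add_one_self)
    have "exp X = exp (X / 2) * exp (X / 2)" by (simp add: exp_add[symmetric])
    also have "\<dots> \<ge> (1 + X / 2) * (1 + X / 2)" using e X1 by (intro mult_mono) auto
    finally have "(1 + X/2) * (1 + X/2) \<le> exp X" .
    moreover have "X / 2 * (X / 2) \<le> (1 + X/2) * (1 + X/2)" using X1 by (intro mult_mono) auto
    ultimately have "X * X / 4 \<le> exp X" by simp
    then have "lam * (X * X / 4) \<le> lam * exp X" using lam by (simp add: mult_left_mono)
    moreover have "X \<le> lam * (X * X / 4)"
    proof -
      have "4 \<le> lam * X" using lam by (simp add: X_def field_simps)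
      then have "4 * X \<le> lam * X * X" using X1 by (simp add: mult_right_mono)
      then show ?thesis by (simp add: field_simps)
    qed
    ultimately show ?thesis by (simp add: f_def)
  qed
  have cont: "\<forall>t. 1 \<le> t \<and> t \<le> X \<longrightarrow> isCont f t" using fd DERIV_isCont by blast
  obtain x where x: "1 \<le> x" "x \<le> X" "f x = 0"
    using IVT[of f 1 0 X, OF less_imp_le[OF f1] fX less_imp_le[OF X1] cont] by blast
  have "x \<noteq> 1" using x(3) f1 by auto
  then have x1: "1 < x" using x(1) by simp
  have xfix: "lam * exp x = x" using x(3) by (simp add: f_def)
  have uniq: "y = x" if y: "1 < y" "lam * exp y = y" for y
  proof (rule ccontr)
    assume ne: "y \<noteq> x"
    define p where "p = min x y"
    define q where "q = max x y"
    have pq: "1 < p" "p < q" "f p = 0" "f q = 0"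
      using ne x1 y xfix by (auto simp: p_def q_def f_def min_def max_def)
    obtain z where z: "p < z" "z < q" "f q - f p = (q - p) * (lam * exp z - 1)"
      using MVT2[OF pq(2), of f "\<lambda>x. lam * exp x - 1"] fd by blast
    have ez: "lam * exp z = 1" using z pq by simp
    obtain w where w: "1 < w" "w < p" "f p - f 1 = (p - 1) * (lam * exp w - 1)"
      using MVT2[OF pq(1), of f "\<lambda>x. lam * exp x - 1"] fd by blast
    have "0 < (p - 1) * (lam * exp w - 1)" using w(3) pq f1 by simp
    then have "1 < lam * exp w" using pq by (simp add: zero_less_mult_iff)
    moreover have "lam * exp w < lam * exp z" using w z lam by simp
    ultimately show False using ez by simp
  qed
  have "fixB lam = x" unfolding fixB_def
  proof (rule the_equality)
    show "1 < x \<and> lam * exp x = x" using x1 xfix by simp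
    fix y assume "1 < y \<and> lam * exp y = y"
    then show "y = x" using uniq by blast
  qed
  then show "1 < fixB lam" "lam * exp (fixB lam) = fixB lam" using x1 xfix by auto
qed


theorem mainTheorem8:
  fixes lam :: real
  assumes "0 < lam" and "lam < exp (-1)"
  shows "(\<forall>r>0. ((\<lambda>x. iterL lam r x / x) \<longlongrightarrow> 0) at_top)
    \<and> (\<forall>r s \<gamma>::real. 0 < r \<longrightarrow> r < s \<longrightarrow> 0 < \<gamma> \<longrightarrow>
         ((\<lambda>x. (iterL lam s x) powr \<gamma> / iterL lam r x) \<longlongrightarrow> 0) at_top)"
proof -
  define b where "b = fixB lam"
  have b1: "1 < b" and fb: "lam * exp b = b" using fixB_prop[OF assms] by (auto simp: b_def)
  interpret koen b using b1 by unfold_locales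
  obtain T where T: "T holomorphic_on UNIV" "\<And>z. T (of_real b * z) = ee (T z)" "T 0 = 0"
     "(T has_field_derivative 1) (at 0)" "\<And>x. T (of_real x) = of_real (Re (T (of_real x)))"
     "\<And>T1. T1 holomorphic_on UNIV \<and> (\<forall>z. T1 (of_real b * z) = ee (T1 z)) \<and> T1 0 = 0 \<and>
        (T1 has_field_derivative 1) (at 0) \<Longrightarrow> T1 = T"
    using T_exists by metis
  define S where "S = (\<lambda>z. of_real b + T z)"
  have lamb: "of_real lam * exp (of_real b) = (of_real b :: complex)"
    using fb by (metis exp_of_real of_real_mult)
  have S_holo: "S holomorphic_on UNIV" unfolding S_def using T(1) by (intro holomorphic_intros)
  have S_fe: "S (of_real b * z) = of_real lam * exp (S z)" for z
  proof -
    have "of_real lam * exp (S z) = of_real lam * exp (of_real b) * exp (T z)"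
      by (simp add: S_def exp_add)
    also have "\<dots> = of_real b * exp (T z)" by (simp add: lamb)
    finally have e1: "of_real lam * exp (S z) = of_real b * exp (T z)" .
    have "S (of_real b * z) = of_real b + ee (T z)" by (simp only: S_def T(2))
    also have "\<dots> = of_real b * exp (T z)" by (simp add: ee_def algebra_simps)
    finally show ?thesis using e1 by simp
  qed
  have S_d: "(S has_field_derivative 1) (at 0)"
    unfolding S_def using T(4) by (auto intro!: derivative_eq_intros)
  have SS: "schroeder lam = S"
    unfolding schroeder_def b_def[symmetric]
  proof (rule the_equality)
    show "S holomorphic_on UNIV \<and> (\<forall>z. S (of_real b * z) = of_real lam * exp (S z)) \<and>
          S 0 = of_real b \<and> deriv S 0 = 1"
      using S_holo S_fe S_d T(3) DERIV_imp_deriv by (auto simp: S_def)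
    fix S1 assume S1: "S1 holomorphic_on UNIV \<and> (\<forall>z. S1 (of_real b * z) = of_real lam * exp (S1 z)) \<and>
          S1 0 = of_real b \<and> deriv S1 0 = 1"
    define T1 where "T1 = (\<lambda>z. S1 z - of_real b)"
    have "T1 holomorphic_on UNIV" unfolding T1_def using S1 by (intro holomorphic_intros) auto
    moreover have "T1 (of_real b * z) = ee (T1 z)" for z
    proof -
      have "S1 (of_real b * z) = of_real lam * exp (of_real b) * exp (T1 z)"
        using S1 by (simp add: T1_def exp_diff)
      then show ?thesis by (simp add: lamb T1_def ee_def algebra_simps)
    qed
    moreover have "T1 0 = 0" using S1 by (simp add: T1_def)
    moreover have "(T1 has_field_derivative 1) (at 0)"
    proof -
      have "S1 field_differentiable at 0"
        using S1 holomorphic_on_imp_differentiable_at[of S1 UNIV 0] by auto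
      then have "(S1 has_field_derivative 1) (at 0)"
        using S1 DERIV_deriv_iff_field_differentiable by metis
      then show ?thesis unfolding T1_def by (auto intro!: derivative_eq_intros)
    qed
    ultimately have "T1 = T" using T(6) by blast
    then show "S1 = S" unfolding S_def T1_def by (auto simp: fun_eq_iff algebra_simps dest: fun_cong)
  qed
  define sr where "sr = schroederR lam"
  have sr_S: "S (of_real x) = of_real (sr x)" for x
  proof -
    have "sr x = Re (S (of_real x))" by (simp add: sr_def schroederR_def SS)
    then show ?thesis using T(5)[of x] by (simp add: S_def complex_eq_iff)
  qed
  define D where "D = (\<lambda>x::real. Re (deriv S (of_real x)))"
  interpret rs sr D b lam
  proof unfold_locales
    show "1 < b" by (rule b1)
    show "0 < lam" by (rule assms(1))
    show "lam * exp b = b" by (rule fb)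
    fix x
    have "of_real (sr (b * x)) = S (of_real b * of_real x)" by (simp add: sr_S[symmetric])
    also have "\<dots> = of_real lam * exp (of_real (sr x))" by (simp add: S_fe sr_S)
    also have "\<dots> = of_real (lam * exp (sr x))" by (simp add: exp_of_real)
    finally show "sr (b * x) = lam * exp (sr x)" by (simp only: of_real_eq_iff)
    have "S field_differentiable at (of_real x)"
      using holomorphic_on_imp_differentiable_at[OF S_holo open_UNIV] by simp
    then have "(S has_field_derivative deriv S (of_real x)) (at (of_real x))"
      using DERIV_deriv_iff_field_differentiable by blast
    then have "((\<lambda>x. S (of_real x)) has_vector_derivative deriv S (of_real x)) (at x)"
      by (rule has_vector_derivative_real_field)
    then have "((\<lambda>x. Re (S (of_real x))) has_field_derivative D x) (at x)"
      unfolding D_def by (rule has_field_derivative_Re)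
    moreover have "(\<lambda>x. Re (S (of_real x))) = sr" by (simp add: fun_eq_iff sr_S)
    ultimately show "(sr has_real_derivative D x) (at x)" by simp
  next
    have "deriv S holomorphic_on UNIV" by (rule holomorphic_deriv[OF S_holo open_UNIV])
    then have "continuous_on UNIV (deriv S)" by (rule holomorphic_on_imp_continuous_on)
    then have "isCont (deriv S) (of_real 0)" by (simp add: continuous_on_eq_continuous_at)
    then have c1: "isCont (\<lambda>x::real. deriv S (of_real x)) 0"
      by (intro isCont_o2[where f="of_real :: real \<Rightarrow> complex" and a=0 and g="deriv S"]) (auto intro: continuous_intros)
    have "isCont (\<lambda>x::real. Re (deriv S (of_real x))) 0"
      by (rule isCont_o2[OF c1]) simp
    then show "isCont D 0" unfolding D_def .
    show "D 0 = 1" using DERIV_imp_deriv[OF S_d] by (simp add: D_def)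
    show "sr 0 = b" using sr_S[of 0] by (simp add: S_def T(3))
  qed
  have sinv_eq: "sinv x = schroederR_inv lam x" for x
    using sinv_unfold[of x] by (simp add: schroederR_inv_def sr_def)
  have iter_eq: "eventually (\<lambda>x. iterL lam r x = sr (b powr (- r) * sinv x)) at_top" for r
    using eventually_gt_at_top[of "fixA lam"]
    by (rule eventually_mono) (unfold sinv_eq, auto simp: iterL_def iterE_def b_def sr_def)
  show ?thesis
  proof (intro conjI allI impI)
    fix r :: real assume r: "0 < r"
    have L: "((\<lambda>x. sr (b powr (- r) * sinv x) / x) \<longlongrightarrow> 0) at_top" using main_rs(1) r by blast
    have E: "eventually (\<lambda>x. sr (b powr (- r) * sinv x) / x = iterL lam r x / x) at_top"
      using iter_eq[of r] by (rule eventually_mono) simp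
    show "((\<lambda>x. iterL lam r x / x) \<longlongrightarrow> 0) at_top" by (rule iffD1[OF tendsto_cong[OF E] L])
  next
    fix r s' \<gamma> :: real assume r: "0 < r" "r < s'" "0 < \<gamma>"
    have L: "((\<lambda>x. sr (b powr (- s') * sinv x) powr \<gamma> / sr (b powr (- r) * sinv x)) \<longlongrightarrow> 0) at_top"
      using main_rs(2) r by blast
    have E: "eventually (\<lambda>x. sr (b powr (- s') * sinv x) powr \<gamma> / sr (b powr (- r) * sinv x)
        = iterL lam s' x powr \<gamma> / iterL lam r x) at_top"
      using iter_eq[of r] iter_eq[of s'] by eventually_elim simp
    show "((\<lambda>x. iterL lam s' x powr \<gamma> / iterL lam r x) \<longlongrightarrow> 0) at_top"
      by (rule iffD1[OF tendsto_cong[OF E] L])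
  qed
qed


end
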